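(* Let $r\ge1$, let $\delta$ be an integer, and for $x,y\in\mathbb R^r$ put $x\cap y=(\min(x_i,y_i))_{1\le i\le r}$. Let $\lambda,\mu\in\mathbb R^r$. (i) If $\lambda$ and $\mu$ are strictly decreasing and are conjugate under the action of $W(C_r)$, then $\lambda$ and $\lambda\cap\mu$ are conjugate under the action of $W(C_r)$. (ii) If $\lambda$ and $\mu$ are decreasing and are conjugate under the star action of $W(C_r)$, then $\lambda$ and $\lambda\cap\mu$ are conjugate under the star action of $W(C_r)$. (iii) Assertions (i) and (ii) also hold with $W(C_r)$ replaced by $W(D_r)$.
   Context: $W(C_r)$ is the group of signed permutations of the coordinates of $\mathbb R^r$ and $W(D_r)\subseteq W(C_r)$ the subgroup of signed permutations involving an even number of sign changes. $\hat\rho=(-\tfrac\delta2,-\tfrac\delta2-1,\dots,-\tfrac\delta2-(r-1))$ and the star action is $w\star x=w(x+\hat\rho)-\hat\rho$. "Decreasing" means $x_1\ge x_2\ge\cdots\ge x_r$; "strictly decreasing" means $x_1>\cdots>x_r$. *)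

theory Defs
  imports Complex_Main "HOL-Combinatorics.Permutations"
begin

text \<open>Vectors in R^r are functions nat => real; only coordinates 0..r-1 matter
  (coordinate i here is coordinate i+1 of the paper).
  A signed permutation is a pair (sigma, s) where sigma permutes {..<r} and
  s i says whether coordinate i is negated.\<close>

definition sp_act :: "nat \<Rightarrow> (nat \<Rightarrow> nat) \<Rightarrow> (nat \<Rightarrow> bool) \<Rightarrow> (nat \<Rightarrow> real) \<Rightarrow> (nat \<Rightarrow> real)" where
  "sp_act r \<sigma> s x = (\<lambda>i. if i < r then (if s i then - x (\<sigma> i) else x (\<sigma> i)) else x i)"

definition W_C :: "nat \<Rightarrow> ((nat \<Rightarrow> nat) \<times> (nat \<Rightarrow> bool)) set" where
  "W_C r = {(\<sigma>, s). \<sigma> permutes {..<r} \<and> (\<forall>i. s i \<longrightarrow> i < r)}"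

definition W_D :: "nat \<Rightarrow> ((nat \<Rightarrow> nat) \<times> (nat \<Rightarrow> bool)) set" where
  "W_D r = {(\<sigma>, s). (\<sigma>, s) \<in> W_C r \<and> even (card {i. i < r \<and> s i})}"

definition rho_hat :: "int \<Rightarrow> nat \<Rightarrow> real" where
  "rho_hat \<delta> i = - (of_int \<delta> / 2) - real i"

definition star_act :: "int \<Rightarrow> nat \<Rightarrow> (nat \<Rightarrow> nat) \<Rightarrow> (nat \<Rightarrow> bool) \<Rightarrow> (nat \<Rightarrow> real) \<Rightarrow> (nat \<Rightarrow> real)" where
  "star_act \<delta> r \<sigma> s x = (\<lambda>i. sp_act r \<sigma> s (\<lambda>j. x j + rho_hat \<delta> j) i - rho_hat \<delta> i)"

definition conj_lin :: "((nat \<Rightarrow> nat) \<times> (nat \<Rightarrow> bool)) set \<Rightarrow> nat \<Rightarrow> (nat \<Rightarrow> real) \<Rightarrow> (nat \<Rightarrow> real) \<Rightarrow> bool" where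
  "conj_lin W r x y \<longleftrightarrow> (\<exists>(\<sigma>, s) \<in> W. \<forall>i < r. sp_act r \<sigma> s x i = y i)"

definition conj_star :: "((nat \<Rightarrow> nat) \<times> (nat \<Rightarrow> bool)) set \<Rightarrow> int \<Rightarrow> nat \<Rightarrow> (nat \<Rightarrow> real) \<Rightarrow> (nat \<Rightarrow> real) \<Rightarrow> bool" where
  "conj_star W \<delta> r x y \<longleftrightarrow> (\<exists>(\<sigma>, s) \<in> W. \<forall>i < r. star_act \<delta> r \<sigma> s x i = y i)"

definition vmeet :: "(nat \<Rightarrow> real) \<Rightarrow> (nat \<Rightarrow> real) \<Rightarrow> (nat \<Rightarrow> real)" where
  "vmeet x y = (\<lambda>i. min (x i) (y i))"

definition decr :: "nat \<Rightarrow> (nat \<Rightarrow> real) \<Rightarrow> bool" where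
  "decr r x \<longleftrightarrow> (\<forall>i j. i < j \<longrightarrow> j < r \<longrightarrow> x j \<le> x i)"

definition strict_decr :: "nat \<Rightarrow> (nat \<Rightarrow> real) \<Rightarrow> bool" where
  "strict_decr r x \<longleftrightarrow> (\<forall>i j. i < j \<longrightarrow> j < r \<longrightarrow> x j < x i)"

end

theory Submission
  imports Defs "HOL-Library.Multiset"
begin

definition absl :: "nat \<Rightarrow> (nat \<Rightarrow> real) \<Rightarrow> real list" where
  "absl r x = map (\<lambda>i. \<bar>x i\<bar>) [0..<r]"

lemma card_absl:
  "card {i. i < r \<and> Q \<bar>x i\<bar>} = size (filter_mset Q (mset (absl r x)))"
proof -
  have "size (filter_mset Q (mset (absl r x))) = length (filter Q (absl r x))"
    by (metis mset_filter size_mset)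
  also have "\<dots> = card {i. i < r \<and> Q \<bar>x i\<bar>}"
    unfolding length_filter_conv_card absl_def by (rule arg_cong[where f=card]) auto
  finally show ?thesis by simp
qed

lemma count_absl:
  "count (mset (absl r x)) v = card {i. i < r \<and> v = \<bar>x i\<bar>}"
  unfolding count_mset count_list_eq_length_filter length_filter_conv_card absl_def by (rule arg_cong[where f=card]) auto

lemma seg_cmp:
  fixes A B :: "nat set"
  assumes "\<forall>i j. i < j \<longrightarrow> j < r \<longrightarrow> j \<in> A \<longrightarrow> i \<in> A"
      and "\<forall>i j. i < j \<longrightarrow> j < r \<longrightarrow> j \<in> B \<longrightarrow> i \<in> B"
      and "A \<subseteq> {..<r}" "B \<subseteq> {..<r}"
  shows "A \<subseteq> B \<or> B \<subseteq> A"
proof (rule ccontr)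
  assume "\<not> ?thesis"
  then have "\<not> A \<subseteq> B" "\<not> B \<subseteq> A" by simp_all
  then obtain a b where ab: "a \<in> A" "a \<notin> B" "b \<in> B" "b \<notin> A" by (meson subsetI)
  have ar: "a < r" using ab(1) assms(3) by auto
  have br: "b < r" using ab(3) assms(4) by auto
  have "a \<noteq> b" using ab by auto
  then consider "a < b" | "b < a" by linarith
  then show False
  proof cases
    case 1 then show False using assms(2) ab br ar by blast
  next
    case 2 then show False using assms(1) ab ar br by blast
  qed
qed

lemma seg_cmp2:
  fixes A B :: "nat set"
  assumes "\<forall>i j. i < j \<longrightarrow> j < r \<longrightarrow> i \<in> A \<longrightarrow> j \<in> A"
      and "\<forall>i j. i < j \<longrightarrow> j < r \<longrightarrow> i \<in> B \<longrightarrow> j \<in> B"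
      and "A \<subseteq> {..<r}" "B \<subseteq> {..<r}"
  shows "A \<subseteq> B \<or> B \<subseteq> A"
proof (rule ccontr)
  assume "\<not> ?thesis"
  then have "\<not> A \<subseteq> B" "\<not> B \<subseteq> A" by simp_all
  then obtain a b where ab: "a \<in> A" "a \<notin> B" "b \<in> B" "b \<notin> A" by (meson subsetI)
  have ar: "a < r" using ab(1) assms(3) by auto
  have br: "b < r" using ab(3) assms(4) by auto
  have "a \<noteq> b" using ab by auto
  then consider "a < b" | "b < a" by linarith
  then show False
  proof cases
    case 1 then show False using assms(1) ab br ar by blast
  next
    case 2 then show False using assms(2) ab ar br by blast
  qed
qed

lemma core:
  fixes P N :: "real \<Rightarrow> bool"
  assumes dx: "decr r x" and dy: "decr r y"
    and up: "\<And>a b. P a \<Longrightarrow> a \<le> b \<Longrightarrow> P b"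
    and dn: "\<And>a b. N a \<Longrightarrow> b \<le> a \<Longrightarrow> N b"
    and eq: "card {i. i < r \<and> P (x i)} + card {i. i < r \<and> N (x i)}
           = card {i. i < r \<and> P (y i)} + card {i. i < r \<and> N (y i)}"
  shows "card {i. i < r \<and> P (min (x i) (y i))} + card {i. i < r \<and> N (min (x i) (y i))}
       = card {i. i < r \<and> P (x i)} + card {i. i < r \<and> N (x i)}"
proof -
  define Px where "Px = {i. i < r \<and> P (x i)}"
  define Py where "Py = {i. i < r \<and> P (y i)}"
  define Nx where "Nx = {i. i < r \<and> N (x i)}"
  define Ny where "Ny = {i. i < r \<and> N (y i)}"
  have Pz: "{i. i < r \<and> P (min (x i) (y i))} = Px \<inter> Py"
    unfolding Px_def Py_def using up by (auto simp: min_def split: if_splits)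
  have Nz: "{i. i < r \<and> N (min (x i) (y i))} = Nx \<union> Ny"
    unfolding Nx_def Ny_def using dn by (auto simp: min_def split: if_splits)
  have fin: "finite Px" "finite Py" "finite Nx" "finite Ny"
    unfolding Px_def Py_def Nx_def Ny_def by auto
  have cP: "Px \<subseteq> Py \<or> Py \<subseteq> Px"
    apply (rule seg_cmp[of r])
    using dx dy up unfolding Px_def Py_def decr_def by auto
  have cN: "Nx \<subseteq> Ny \<or> Ny \<subseteq> Nx"
    apply (rule seg_cmp2[of r])
    using dx dy dn unfolding Nx_def Ny_def decr_def by auto
  have eq': "card Px + card Nx = card Py + card Ny" using eq unfolding Px_def Py_def Nx_def Ny_def .
  have "card (Px \<inter> Py) + card (Nx \<union> Ny) = card Px + card Nx"
  proof -
    from cP cN show ?thesis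
    proof (elim disjE)
      assume a: "Px \<subseteq> Py" "Nx \<subseteq> Ny"
      then have "card Px \<le> card Py" "card Nx \<le> card Ny" using fin card_mono by auto
      then show ?thesis using a eq' by (simp add: Int_absorb2 Un_absorb1)
    next
      assume a: "Px \<subseteq> Py" "Ny \<subseteq> Nx"
      then show ?thesis by (simp add: Int_absorb2 Un_absorb2)
    next
      assume a: "Py \<subseteq> Px" "Nx \<subseteq> Ny"
      then show ?thesis using eq' by (simp add: Int_absorb1 Un_absorb1)
    next
      assume a: "Py \<subseteq> Px" "Ny \<subseteq> Nx"
      then have "card Py \<le> card Px" "card Ny \<le> card Nx" using fin card_mono by auto
      then show ?thesis using a eq' by (simp add: Int_absorb1 Un_absorb2)
    qed
  qed
  then show ?thesis using Pz Nz unfolding Px_def Nx_def by simp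
qed

lemma abs_ge_split:
  fixes w :: "nat \<Rightarrow> real"
  assumes "(0::real) < v"
  shows "card {i. i < r \<and> v \<le> \<bar>w i\<bar>} = card {i. i < r \<and> v \<le> w i} + card {i. i < r \<and> w i \<le> - v}"
proof -
  have "{i. i < r \<and> v \<le> \<bar>w i\<bar>} = {i. i < r \<and> v \<le> w i} \<union> {i. i < r \<and> w i \<le> - v}"
    by auto
  moreover have "{i. i < r \<and> v \<le> w i} \<inter> {i. i < r \<and> w i \<le> - v} = {}" using assms by auto
  moreover have "finite {i. i < r \<and> P i}" for P by auto
  ultimately show ?thesis by (simp add: card_Un_disjoint)
qed

lemma abs_gt_split:
  fixes w :: "nat \<Rightarrow> real"
  assumes "(0::real) \<le> v"
  shows "card {i. i < r \<and> v < \<bar>w i\<bar>} = card {i. i < r \<and> v < w i} + card {i. i < r \<and> w i < - v}"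
proof -
  have "{i. i < r \<and> v < \<bar>w i\<bar>} = {i. i < r \<and> v < w i} \<union> {i. i < r \<and> w i < - v}"
    by auto
  moreover have "{i. i < r \<and> v < w i} \<inter> {i. i < r \<and> w i < - v} = {}" using assms by auto
  moreover have "finite {i. i < r \<and> P i}" for P by auto
  ultimately show ?thesis by (simp add: card_Un_disjoint)
qed

lemma absmeet:
  assumes dx: "decr r x" and dy: "decr r y" and m: "mset (absl r x) = mset (absl r y)"
  shows "mset (absl r (vmeet x y)) = mset (absl r x)"
proof -
  let ?z = "vmeet x y"
  have cnt: "card {i. i < r \<and> Q \<bar>x i\<bar>} = card {i. i < r \<and> Q \<bar>y i\<bar>}" for Q
    using m by (simp add: card_absl)
  have G: "card {i. i < r \<and> t \<le> \<bar>?z i\<bar>} = card {i. i < r \<and> t \<le> \<bar>x i\<bar>}" for t :: real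
  proof (cases "t > 0")
    case True
    have "card {i. i < r \<and> t \<le> \<bar>?z i\<bar>} = card {i. i < r \<and> t \<le> min (x i) (y i)} + card {i. i < r \<and> min (x i) (y i) \<le> - t}"
      using abs_ge_split[OF True, of r ?z] by (simp add: vmeet_def)
    also have "\<dots> = card {i. i < r \<and> t \<le> x i} + card {i. i < r \<and> x i \<le> - t}"
      apply (rule core[OF dx dy, where P="\<lambda>u. t \<le> u" and N="\<lambda>u. u \<le> - t"])
        apply auto[2]
      using cnt[of "\<lambda>u. t \<le> u"] abs_ge_split[OF True, of r x] abs_ge_split[OF True, of r y] by simp
    also have "\<dots> = card {i. i < r \<and> t \<le> \<bar>x i\<bar>}" using abs_ge_split[OF True, of r x] by simp
    finally show ?thesis .
  next
    case False
    then show ?thesis by (simp add: order_trans[OF _ abs_ge_zero])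
  qed
  have H: "card {i. i < r \<and> t < \<bar>?z i\<bar>} = card {i. i < r \<and> t < \<bar>x i\<bar>}" for t :: real
  proof (cases "t \<ge> 0")
    case True
    have "card {i. i < r \<and> t < \<bar>?z i\<bar>} = card {i. i < r \<and> t < min (x i) (y i)} + card {i. i < r \<and> min (x i) (y i) < - t}"
      using abs_gt_split[OF True, of r ?z] by (simp add: vmeet_def)
    also have "\<dots> = card {i. i < r \<and> t < x i} + card {i. i < r \<and> x i < - t}"
      apply (rule core[OF dx dy, where P="\<lambda>u. t < u" and N="\<lambda>u. u < - t"])
        apply auto[2]
      using cnt[of "\<lambda>u. t < u"] abs_gt_split[OF True, of r x] abs_gt_split[OF True, of r y] by simp
    also have "\<dots> = card {i. i < r \<and> t < \<bar>x i\<bar>}" using abs_gt_split[OF True, of r x] by simp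
    finally show ?thesis .
  next
    case False
    then show ?thesis by (simp add: order_less_le_trans[OF _ abs_ge_zero])
  qed
  have E: "card {i. i < r \<and> v = \<bar>w i\<bar>} = card {i. i < r \<and> v \<le> \<bar>w i\<bar>} - card {i. i < r \<and> v < \<bar>w i\<bar>}" for v :: real and w
  proof -
    have "{i. i < r \<and> v = \<bar>w i\<bar>} = {i. i < r \<and> v \<le> \<bar>w i\<bar>} - {i. i < r \<and> v < \<bar>w i\<bar>}" by auto
    then show ?thesis by (simp add: card_Diff_subset subset_iff)
  qed
  show ?thesis
    by (rule multiset_eqI) (simp add: count_absl E G H)
qed

lemma absl_nth: "i < r \<Longrightarrow> absl r x ! i = \<bar>x i\<bar>"
  by (simp add: absl_def)

lemma length_absl[simp]: "length (absl r x) = r"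
  by (simp add: absl_def)

lemma conjC_mset:
  assumes "conj_lin (W_C r) r x y"
  shows "mset (absl r x) = mset (absl r y)"
proof -
  obtain \<sigma> s where ws: "(\<sigma>, s) \<in> W_C r" and act: "\<forall>i<r. sp_act r \<sigma> s x i = y i"
    using assms unfolding conj_lin_def by blast
  have p: "\<sigma> permutes {..<r}" using ws by (simp add: W_C_def)
  have "absl r y = permute_list \<sigma> (absl r x)"
  proof (rule nth_equalityI)
    show "length (absl r y) = length (permute_list \<sigma> (absl r x))" by simp
    fix i assume "i < length (absl r y)"
    then have i: "i < r" by simp
    have si: "\<sigma> i < r" using permutes_in_image[OF p] i by simp
    have "permute_list \<sigma> (absl r x) ! i = \<bar>x (\<sigma> i)\<bar>"
      using permute_list_nth[of \<sigma> "absl r x" i] p i si by (simp add: absl_nth)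
    moreover have "y i = (if s i then - x (\<sigma> i) else x (\<sigma> i))"
      using act i by (simp add: sp_act_def)
    ultimately show "absl r y ! i = permute_list \<sigma> (absl r x) ! i"
      using i by (simp add: absl_nth)
  qed
  then show ?thesis using p by simp
qed

lemma mset_perm:
  assumes "mset (absl r x) = mset (absl r y)"
  obtains p where "p permutes {..<r}" "\<And>i. i < r \<Longrightarrow> \<bar>x (p i)\<bar> = \<bar>y i\<bar>"
proof -
  obtain p where p: "p permutes {..<length (absl r x)}" "permute_list p (absl r x) = absl r y"
    using mset_eq_permutation[of "absl r y" "absl r x"] assms by metis
  have "\<bar>x (p i)\<bar> = \<bar>y i\<bar>" if i: "i < r" for i
  proof -
    have si: "p i < r" using permutes_in_image[OF p(1)] i by simp
    have "permute_list p (absl r x) ! i = absl r y ! i" using p(2) by simp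
    then show ?thesis using permute_list_nth[of p "absl r x" i] p(1) i si by (simp add: absl_nth)
  qed
  then show ?thesis using that p(1) by simp
qed

lemma mset_conjC:
  assumes "mset (absl r x) = mset (absl r y)"
  obtains p s where "(p, s) \<in> W_C r" "\<forall>i<r. sp_act r p s x i = y i"
    "s = (\<lambda>i. i < r \<and> x (p i) \<noteq> y i)"
proof -
  obtain p where p: "p permutes {..<r}" "\<And>i. i < r \<Longrightarrow> \<bar>x (p i)\<bar> = \<bar>y i\<bar>"
    using mset_perm[OF assms] by blast
  let ?s = "\<lambda>i. i < r \<and> x (p i) \<noteq> y i"
  have "(p, ?s) \<in> W_C r" using p(1) by (simp add: W_C_def)
  moreover have "\<forall>i<r. sp_act r p ?s x i = y i"
  proof (intro allI impI)
    fix i assume i: "i < r"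
    show "sp_act r p ?s x i = y i" using p(2)[OF i] i unfolding sp_act_def by (auto simp: abs_if split: if_splits)
  qed
  ultimately show ?thesis using that by blast
qed

lemma conjC_iff: "conj_lin (W_C r) r x y \<longleftrightarrow> mset (absl r x) = mset (absl r y)"
proof
  assume "conj_lin (W_C r) r x y"
  then show "mset (absl r x) = mset (absl r y)" by (rule conjC_mset)
next
  assume m: "mset (absl r x) = mset (absl r y)"
  obtain p s where "(p, s) \<in> W_C r" "\<forall>i<r. sp_act r p s x i = y i"
    using mset_conjC[OF m] by metis
  then show "conj_lin (W_C r) r x y" unfolding conj_lin_def by auto
qed

lemma perm_card:
  assumes p: "\<sigma> permutes {..<r}"
  shows "card {i. i < r \<and> P (\<sigma> i)} = card {j. j < r \<and> P j}"
proof -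
  have "\<sigma> ` {i. i < r \<and> P (\<sigma> i)} = {j. j < r \<and> P j}"
  proof
    show "\<sigma> ` {i. i < r \<and> P (\<sigma> i)} \<subseteq> {j. j < r \<and> P j}"
      using permutes_in_image[OF p] by auto
    show "{j. j < r \<and> P j} \<subseteq> \<sigma> ` {i. i < r \<and> P (\<sigma> i)}"
    proof
      fix j assume j: "j \<in> {j. j < r \<and> P j}"
      have "inv \<sigma> j < r" using permutes_in_image[OF permutes_inv[OF p]] j by simp
      moreover have "\<sigma> (inv \<sigma> j) = j" using permutes_inverses(1)[OF p] by simp
      ultimately show "j \<in> \<sigma> ` {i. i < r \<and> P (\<sigma> i)}" using j by (metis (mono_tags, lifting) image_eqI mem_Collect_eq)
    qed
  qed
  moreover have "inj_on \<sigma> {i. i < r \<and> P (\<sigma> i)}"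
    using permutes_inj[OF p] by (simp add: inj_on_def inj_def)
  ultimately show ?thesis by (metis card_image)
qed

lemma symdiff_parity:
  assumes "finite S" "finite A"
  shows "even (card ((S - A) \<union> (A - S))) = even (card S + card A)"
proof -
  have d: "(S - A) \<inter> (A - S) = {}" by auto
  have c1: "card (S - A) = card S - card (S \<inter> A)" using assms by (simp add: card_Diff_subset_Int)
  have c2: "card (A - S) = card A - card (S \<inter> A)" using assms
    by (simp add: card_Diff_subset_Int Int_commute)
  have l1: "card (S \<inter> A) \<le> card S" using assms by (simp add: card_mono)
  have l2: "card (S \<inter> A) \<le> card A" using assms by (simp add: card_mono)
  have "card ((S - A) \<union> (A - S)) = card (S - A) + card (A - S)"
    using d assms by (simp add: card_Un_disjoint)
  then have "card ((S - A) \<union> (A - S)) + 2 * card (S \<inter> A) = card S + card A"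
    using c1 c2 l1 l2 by simp
  then show ?thesis by (metis even_add even_mult_iff even_numeral)
qed

lemma sign_parity:
  assumes ws: "(\<sigma>, s) \<in> W_C r" and nz: "\<forall>j<r. x j \<noteq> 0"
    and act: "\<forall>i<r. sp_act r \<sigma> s x i = y i"
  shows "even (card {i. i < r \<and> y i < 0}) = even (card {i. i < r \<and> s i} + card {j. j < r \<and> x j < 0})"
proof -
  have p: "\<sigma> permutes {..<r}" and sr: "\<And>i. s i \<Longrightarrow> i < r" using ws by (auto simp: W_C_def)
  let ?S = "{i. i < r \<and> s i}" and ?A = "{i. i < r \<and> x (\<sigma> i) < 0}"
  have "{i. i < r \<and> y i < 0} = (?S - ?A) \<union> (?A - ?S)"
  proof (rule set_eqI)
    fix i
    show "i \<in> {i. i < r \<and> y i < 0} \<longleftrightarrow> i \<in> (?S - ?A) \<union> (?A - ?S)"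
    proof (cases "i < r")
      case True
      have "\<sigma> i < r" using permutes_in_image[OF p] True by simp
      then have "x (\<sigma> i) \<noteq> 0" using nz by simp
      moreover have "y i = (if s i then - x (\<sigma> i) else x (\<sigma> i))" using act True by (simp add: sp_act_def)
      ultimately show ?thesis using True by auto
    qed auto
  qed
  then have "even (card {i. i < r \<and> y i < 0}) = even (card ?S + card ?A)"
    using symdiff_parity[of ?S ?A] by simp
  moreover have "card ?A = card {j. j < r \<and> x j < 0}" using perm_card[OF p, of "\<lambda>j. x j < 0"] by simp
  ultimately show ?thesis by simp
qed

lemma conjD_C: "conj_lin (W_D r) r x y \<Longrightarrow> conj_lin (W_C r) r x y"
  unfolding conj_lin_def W_D_def by blast

lemma conjD_parity:
  assumes "conj_lin (W_D r) r x y" "\<forall>j<r. x j \<noteq> 0"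
  shows "even (card {i. i < r \<and> y i < 0}) = even (card {j. j < r \<and> x j < 0})"
proof -
  obtain \<sigma> s where ws: "(\<sigma>, s) \<in> W_D r" and act: "\<forall>i<r. sp_act r \<sigma> s x i = y i"
    using assms(1) unfolding conj_lin_def by blast
  have "(\<sigma>, s) \<in> W_C r" "even (card {i. i < r \<and> s i})" using ws by (auto simp: W_D_def)
  then show ?thesis using sign_parity[of \<sigma> s r x y] assms(2) act by simp
qed

lemma conjD_intro:
  assumes m: "mset (absl r x) = mset (absl r y)"
    and c: "(\<exists>j<r. x j = 0) \<or> even (card {i. i < r \<and> y i < 0}) = even (card {j. j < r \<and> x j < 0})"
  shows "conj_lin (W_D r) r x y"
proof -
  obtain p s where ws: "(p, s) \<in> W_C r" and act: "\<forall>i<r. sp_act r p s x i = y i"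
    using mset_conjC[OF m] by metis
  have pp: "p permutes {..<r}" and sr: "\<And>i. s i \<Longrightarrow> i < r" using ws by (auto simp: W_C_def)
  show ?thesis
  proof (cases "even (card {i. i < r \<and> s i})")
    case True
    then show ?thesis using ws act unfolding conj_lin_def W_D_def by blast
  next
    case odd: False
    show ?thesis
    proof (cases "\<exists>j<r. x j = 0")
      case True
      then obtain j where j: "j < r" "x j = 0" by blast
      define k where "k = inv p j"
      have k: "k < r" using permutes_in_image[OF permutes_inv[OF pp]] j unfolding k_def by simp
      have pk: "p k = j" using permutes_inverses(1)[OF pp] unfolding k_def by simp
      define s1 where "s1 = s(k := \<not> s k)"
      have ws1: "(p, s1) \<in> W_C r" using pp sr k unfolding s1_def W_C_def by auto
      have act1: "\<forall>i<r. sp_act r p s1 x i = y i"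
      proof (intro allI impI)
        fix i assume i: "i < r"
        have "sp_act r p s1 x i = sp_act r p s x i"
          using pk j unfolding s1_def sp_act_def by auto
        then show "sp_act r p s1 x i = y i" using act i by simp
      qed
      have fin: "finite {i. i < r \<and> s i}" by simp
      have "even (card {i. i < r \<and> s1 i})"
      proof (cases "s k")
        case True
        have "{i. i < r \<and> s1 i} = {i. i < r \<and> s i} - {k}" unfolding s1_def using True by auto
        moreover have "k \<in> {i. i < r \<and> s i}" using True k by simp
        ultimately have "card {i. i < r \<and> s1 i} + 1 = card {i. i < r \<and> s i}"
          using fin card_Suc_Diff1[of "{i. i < r \<and> s i}" k] by simp
        then show ?thesis using odd by presburger
      next
        case False
        have "{i. i < r \<and> s1 i} = insert k {i. i < r \<and> s i}" unfolding s1_def using False k by auto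
        moreover have "k \<notin> {i. i < r \<and> s i}" using False by simp
        ultimately have "card {i. i < r \<and> s1 i} = card {i. i < r \<and> s i} + 1"
          using fin by simp
        then show ?thesis using odd by presburger
      qed
      then show ?thesis using ws1 act1 unfolding conj_lin_def W_D_def by blast
    next
      case False
      then have nz: "\<forall>j<r. x j \<noteq> 0" by auto
      from sign_parity[OF ws nz act] c False odd show ?thesis by simp
    qed
  qed
qed

lemma meetC:
  assumes "decr r x" "decr r y" "conj_lin (W_C r) r x y"
  shows "conj_lin (W_C r) r x (vmeet x y)"
  using absmeet[OF assms(1,2)] assms(3) by (simp add: conjC_iff)

lemma meetD:
  assumes dx: "decr r x" and dy: "decr r y" and c: "conj_lin (W_D r) r x y"
  shows "conj_lin (W_D r) r x (vmeet x y)"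
proof -
  have m: "mset (absl r x) = mset (absl r y)" using conjD_C[OF c] by (simp add: conjC_iff)
  have mz: "mset (absl r x) = mset (absl r (vmeet x y))" using absmeet[OF dx dy m] by simp
  show ?thesis
  proof (cases "\<exists>j<r. x j = 0")
    case True
    then show ?thesis using conjD_intro[OF mz] by blast
  next
    case False
    then have nz: "\<forall>j<r. x j \<noteq> 0" by auto
    have par: "even (card {i. i < r \<and> y i < 0}) = even (card {j. j < r \<and> x j < 0})"
      using conjD_parity[OF c nz] .
    define Nx where "Nx = {i. i < r \<and> x i < 0}"
    define Ny where "Ny = {i. i < r \<and> y i < 0}"
    have Nz: "{i. i < r \<and> vmeet x y i < 0} = Nx \<union> Ny"
      unfolding Nx_def Ny_def vmeet_def by (auto simp: min_def)
    have cN: "Nx \<subseteq> Ny \<or> Ny \<subseteq> Nx"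
      apply (rule seg_cmp2[of r])
      using dx dy unfolding Nx_def Ny_def decr_def by auto (meson le_less_trans)+
    have "even (card {i. i < r \<and> vmeet x y i < 0}) = even (card {j. j < r \<and> x j < 0})"
      using cN par unfolding Nz by (auto simp: Un_absorb1 Un_absorb2 Nx_def Ny_def)
    then show ?thesis using conjD_intro[OF mz] by blast
  qed
qed

definition shiftv :: "int \<Rightarrow> (nat \<Rightarrow> real) \<Rightarrow> (nat \<Rightarrow> real)" where
  "shiftv \<delta> x = (\<lambda>i. x i + rho_hat \<delta> i)"

lemma star_lin: "conj_star W \<delta> r x y \<longleftrightarrow> conj_lin W r (shiftv \<delta> x) (shiftv \<delta> y)"
proof -
  have "(\<forall>i<r. star_act \<delta> r \<sigma> s x i = y i) \<longleftrightarrow> (\<forall>i<r. sp_act r \<sigma> s (shiftv \<delta> x) i = shiftv \<delta> y i)" for \<sigma> s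
    unfolding star_act_def shiftv_def by auto
  then show ?thesis unfolding conj_star_def conj_lin_def by auto
qed

lemma decr_shift: "decr r x \<Longrightarrow> decr r (shiftv \<delta> x)"
  unfolding decr_def shiftv_def rho_hat_def
proof (intro allI impI)
  fix i j :: nat assume d: "\<forall>i j. i < j \<longrightarrow> j < r \<longrightarrow> x j \<le> x i" and ij: "i < j" "j < r"
  have "x j \<le> x i" using d ij by blast
  moreover have "real i < real j" using ij by simp
  ultimately show "x j + (- (real_of_int \<delta> / 2) - real j) \<le> x i + (- (real_of_int \<delta> / 2) - real i)"
    by linarith
qed

lemma shift_meet: "shiftv \<delta> (vmeet x y) = vmeet (shiftv \<delta> x) (shiftv \<delta> y)"
  unfolding shiftv_def vmeet_def by (auto simp: min_def)

lemma strict_decr_decr: "strict_decr r x \<Longrightarrow> decr r x"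
  unfolding strict_decr_def decr_def by (meson less_imp_le)

theorem proposition3p2:
  fixes r :: nat and \<delta> :: int and lam mu :: "nat \<Rightarrow> real"
  assumes "r \<ge> 1"
  shows "(strict_decr r lam \<and> strict_decr r mu \<and> conj_lin (W_C r) r lam mu
            \<longrightarrow> conj_lin (W_C r) r lam (vmeet lam mu))
       \<and> (decr r lam \<and> decr r mu \<and> conj_star (W_C r) \<delta> r lam mu
            \<longrightarrow> conj_star (W_C r) \<delta> r lam (vmeet lam mu))
       \<and> (strict_decr r lam \<and> strict_decr r mu \<and> conj_lin (W_D r) r lam mu
            \<longrightarrow> conj_lin (W_D r) r lam (vmeet lam mu))
       \<and> (decr r lam \<and> decr r mu \<and> conj_star (W_D r) \<delta> r lam mu
            \<longrightarrow> conj_star (W_D r) \<delta> r lam (vmeet lam mu))"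
proof (intro conjI impI)
  assume a: "strict_decr r lam \<and> strict_decr r mu \<and> conj_lin (W_C r) r lam mu"
  then show "conj_lin (W_C r) r lam (vmeet lam mu)"
    using meetC[of r lam mu] strict_decr_decr[of r lam] strict_decr_decr[of r mu] by blast
next
  assume a: "strict_decr r lam \<and> strict_decr r mu \<and> conj_lin (W_D r) r lam mu"
  then show "conj_lin (W_D r) r lam (vmeet lam mu)"
    using meetD[of r lam mu] strict_decr_decr[of r lam] strict_decr_decr[of r mu] by blast
next
  assume a: "decr r lam \<and> decr r mu \<and> conj_star (W_C r) \<delta> r lam mu"
  then have "conj_lin (W_C r) r (shiftv \<delta> lam) (vmeet (shiftv \<delta> lam) (shiftv \<delta> mu))"
    using meetC[of r "shiftv \<delta> lam" "shiftv \<delta> mu"] decr_shift[of r lam \<delta>] decr_shift[of r mu \<delta>]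
      star_lin[of "W_C r" \<delta> r lam mu] by blast
  then show "conj_star (W_C r) \<delta> r lam (vmeet lam mu)"
    by (simp only: star_lin shift_meet)
next
  assume a: "decr r lam \<and> decr r mu \<and> conj_star (W_D r) \<delta> r lam mu"
  then have "conj_lin (W_D r) r (shiftv \<delta> lam) (vmeet (shiftv \<delta> lam) (shiftv \<delta> mu))"
    using meetD[of r "shiftv \<delta> lam" "shiftv \<delta> mu"] decr_shift[of r lam \<delta>] decr_shift[of r mu \<delta>]
      star_lin[of "W_D r" \<delta> r lam mu] by blast
  then show "conj_star (W_D r) \<delta> r lam (vmeet lam mu)"
    by (simp only: star_lin shift_meet)
qed

end
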